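(* Let $\rho \in \mathcal{D}(\mathcal{H}_{B})$. If $\rho$ satisfies $\tr[\rho P_{DC}]=q$, then $\tr[\rho \Pi^N] \geq 1-\frac{q}{\lambda_{\mathrm{min}}^{N+1}}$, where $\Pi^N=\sum_{k=0}^N \tilde{\Pi}^k$. $N$ must be larger than 1 to obtain a nontrivial bound.
   Context: $\mathcal{H}_B$ is a two-polarization-mode Fock space. Bob's double-click POVM is $P_{DC} = p_{z} P_{H/V}+ (1-p_{z}) P_{D/A}$, where $P_{H/V} = \sum_{n_V=1}^\infty \sum_{n_H=1}^\infty |n_H,n_V\rangle\langle n_H,n_V|$ and $P_{D/A}$ is analogous in the diagonal basis, $p_z$ being the probability of choosing the $H/V$ basis. $\tilde{\Pi}^k = \sum_{n=0}^k |n,k-n\rangle\langle n,k-n|_{H/V}$ projects onto the total $k$-photon subspace, and $\lambda^{k}_{\min}$ denotes the smallest eigenvalue of $\tilde{\Pi}^k P_{DC}\tilde{\Pi}^k$, given by $\lambda^k_{\min}=\frac12-\frac12\sqrt{(2p_z-1)^2+8\cdot 2^{-k}(p_z-p_z^2)}$ for $k$ odd and $\frac12-\frac12\sqrt{(2p_z-1)^2+16\cdot 2^{-k}(p_z-p_z^2)}$ for $k$ even; this sequence is nondecreasing in $k$. *)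

theory Defs
  imports "HOL-Analysis.Analysis"
begin

text \<open>The two-polarization-mode Fock space H_B is represented in its Fock basis
  |n_H, n_V>, indexed by pairs (n_H, n_V) :: nat \<times> nat. Operators are given by
  their matrices in this orthonormal basis.\<close>

type_synonym fock_idx = "nat \<times> nat"
type_synonym fock_op = "fock_idx \<Rightarrow> fock_idx \<Rightarrow> complex"

definition density_matrix :: "fock_op \<Rightarrow> bool" where
  "density_matrix \<rho> \<longleftrightarrow>
     (\<forall>a b. \<rho> a b = cnj (\<rho> b a)) \<and>
     (\<forall>F (v :: fock_idx \<Rightarrow> complex). finite F \<longrightarrow>
        0 \<le> Re (\<Sum>a\<in>F. \<Sum>b\<in>F. cnj (v a) * \<rho> a b * v b)) \<and>
     ((\<lambda>a. \<rho> a a) has_sum 1) UNIV"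

definition fock_block :: "nat \<Rightarrow> fock_idx set" where
  "fock_block k = {(a, b). a + b = k}"

text \<open>Amplitude <r, k-r |_{H/V} | m, k-m >_{D/A}, where
  a_D^dag = (a_H^dag + a_V^dag)/sqrt 2 and a_A^dag = (a_H^dag - a_V^dag)/sqrt 2.\<close>
definition da_amp :: "nat \<Rightarrow> nat \<Rightarrow> nat \<Rightarrow> real" where
  "da_amp k m r =
     (1 / sqrt (2 ^ k)) * sqrt (fact r * fact (k - r) / (fact m * fact (k - m))) *
     (\<Sum>j\<le>min m r. real (m choose j) * real ((k - m) choose (r - j)) *
                      (-1) ^ ((k - m) - (r - j)))"

definition P_HV :: "fock_op" where
  "P_HV a b = (if a = b \<and> fst a \<ge> 1 \<and> snd a \<ge> 1 then 1 else 0)"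

text \<open>P_{D/A} = sum over m >= 1, k-m >= 1 of |m,k-m>_{D/A}<m,k-m|_{D/A}
  (block diagonal in the total photon number k).\<close>
definition P_DA :: "fock_op" where
  "P_DA a b = (if fst a + snd a = fst b + snd b then
      (let k = fst a + snd a in
         complex_of_real (\<Sum>m\<in>{1..k-1}. da_amp k m (fst a) * da_amp k m (fst b)))
      else 0)"

definition P_DC :: "real \<Rightarrow> fock_op" where
  "P_DC pz a b = complex_of_real pz * P_HV a b + complex_of_real (1 - pz) * P_DA a b"

definition Pi_tilde :: "nat \<Rightarrow> fock_op" where
  "Pi_tilde k a b = (if a = b \<and> fst a + snd a = k then 1 else 0)"

definition Pi_N :: "nat \<Rightarrow> fock_op" where
  "Pi_N N a b = (\<Sum>k\<le>N. Pi_tilde k a b)"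

text \<open>tr[rho P] for an operator P that is block diagonal with respect to the total
  photon number: tr[rho P] = sum_k sum_{a,b in block k} rho_{ab} P_{ba}.\<close>
definition tr_block :: "fock_op \<Rightarrow> fock_op \<Rightarrow> real" where
  "tr_block \<rho> P = (\<Sum>\<^sub>\<infinity>k. Re (\<Sum>a\<in>fock_block k. \<Sum>b\<in>fock_block k. \<rho> a b * P b a))"

definition lambda_min :: "real \<Rightarrow> nat \<Rightarrow> real" where
  "lambda_min pz k =
     (if odd k then 1/2 - 1/2 * sqrt ((2*pz - 1)^2 + 8 * (1/2)^k * (pz - pz^2))
      else 1/2 - 1/2 * sqrt ((2*pz - 1)^2 + 16 * (1/2)^k * (pz - pz^2)))"

end

theory Submission
  imports Defs "HOL-Computational_Algebra.Polynomial"
begin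

lemma coeff_lin_pow: "coeff ([:a, b:] ^ n) i = of_nat (n choose i) * b ^ i * (a::real) ^ (n - i)"
proof (cases "i \<le> n")
  case True thus ?thesis by (rule coeff_linear_poly_power)
next
  case False
  have "degree ([:a, b:] ^ n) \<le> n"
    by (rule order.trans[OF degree_power_le]) auto
  thus ?thesis using False by (simp add: coeff_eq_0)
qed

definition Pm :: "nat \<Rightarrow> nat \<Rightarrow> real poly" where
  "Pm k m = [:1,1:]^m * [:-1,1:]^(k-m)"

lemma Pm_coeff:
  "coeff (Pm k m) r = (\<Sum>j\<le>min m r. real (m choose j) * real ((k - m) choose (r - j)) *
                      (-1) ^ ((k - m) - (r - j)))"
proof -
  have "coeff (Pm k m) r = (\<Sum>j\<le>r. real (m choose j) * real ((k - m) choose (r - j)) *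
                      (-1) ^ ((k - m) - (r - j)))"
    unfolding Pm_def coeff_mult coeff_lin_pow by (simp add: mult.assoc)
  also have "\<dots> = (\<Sum>j\<le>min m r. real (m choose j) * real ((k - m) choose (r - j)) *
                      (-1) ^ ((k - m) - (r - j)))"
    by (rule sum.mono_neutral_right) auto
  finally show ?thesis .
qed

lemma poly_Pm: "poly (Pm k m) x = (1 + x)^m * (x - 1)^(k-m)"
  by (simp add: Pm_def algebra_simps)

lemma key_ident:
  assumes "r \<le> k" "s \<le> k"
  shows "(\<Sum>m\<le>k. real (k choose m) * coeff (Pm k m) r * coeff (Pm k m) s)
         = (if r = s then 2^k * real (k choose r) else 0)"
proof -
  have Rx: "coeff (\<Sum>m\<le>k. smult (real (k choose m) * poly (Pm k m) x) (Pm k m)) s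
        = real (k choose s) * (2*x)^s * 2^(k-s)" for x
  proof -
    have "(\<Sum>m\<le>k. smult (real (k choose m) * poly (Pm k m) x) (Pm k m)) = [:2, 2*x:]^k"
    proof (rule poly_eq_poly_eq_iff[THEN iffD1], rule ext)
      fix y
      have "poly (\<Sum>m\<le>k. smult (real (k choose m) * poly (Pm k m) x) (Pm k m)) y
          = (\<Sum>m\<le>k. real (k choose m) * ((1+x)*(1+y))^m * ((x-1)*(y-1))^(k-m))"
        by (simp add: poly_sum poly_Pm power_mult_distrib mult_ac)
      also have "\<dots> = ((1+x)*(1+y) + (x-1)*(y-1))^k"
        by (simp add: binomial_ring mult_ac)
      also have "\<dots> = poly ([:2, 2*x:]^k) y"
        by (simp add: algebra_simps)
      finally show "poly (\<Sum>m\<le>k. smult (real (k choose m) * poly (Pm k m) x) (Pm k m)) y = poly ([:2, 2*x:]^k) y" .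
    qed
    thus ?thesis by (simp add: coeff_lin_pow)
  qed
  have "(\<Sum>m\<le>k. smult (real (k choose m) * coeff (Pm k m) s) (Pm k m)) = monom (2^k * real (k choose s)) s"
  proof (rule poly_eq_poly_eq_iff[THEN iffD1], rule ext)
    fix x
    have "poly (\<Sum>m\<le>k. smult (real (k choose m) * coeff (Pm k m) s) (Pm k m)) x
        = coeff (\<Sum>m\<le>k. smult (real (k choose m) * poly (Pm k m) x) (Pm k m)) s"
      by (simp add: poly_sum coeff_sum mult_ac)
    also have "\<dots> = real (k choose s) * (2*x)^s * 2^(k-s)" by (rule Rx)
    also have "\<dots> = poly (monom (2^k * real (k choose s)) s) x"
      using assms by (simp add: poly_monom power_mult_distrib power_add[symmetric])
    finally show "poly (\<Sum>m\<le>k. smult (real (k choose m) * coeff (Pm k m) s) (Pm k m)) x = poly (monom (2^k * real (k choose s)) s) x" .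
  qed
  hence "coeff (\<Sum>m\<le>k. smult (real (k choose m) * coeff (Pm k m) s) (Pm k m)) r = coeff (monom (2^k * real (k choose s)) s) r"
    by simp
  thus ?thesis by (simp add: coeff_sum mult_ac)
qed

lemma da_amp_Pm: "da_amp k m r = (1 / sqrt (2 ^ k)) * sqrt (fact r * fact (k - r) / (fact m * fact (k - m))) * coeff (Pm k m) r"
  unfolding da_amp_def Pm_coeff by simp

lemma da_complete:
  assumes "r \<le> k" "s \<le> k"
  shows "(\<Sum>m\<le>k. da_amp k m r * da_amp k m s) = (if r = s then 1 else 0)"
proof -
  define fr where "fr = (fact r * fact (k - r) :: real)"
  define fs where "fs = (fact s * fact (k - s) :: real)"
  have pos: "fr > 0" "fs > 0" unfolding fr_def fs_def by auto
  have "da_amp k m r * da_amp k m s = (1 / 2^k) * (sqrt (fr * fs) / fact k) *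
          (real (k choose m) * coeff (Pm k m) r * coeff (Pm k m) s)" if "m \<le> k" for m
  proof -
    have fm: "(fact m * fact (k - m) :: real) > 0" by auto
    have b: "real (k choose m) = fact k / (fact m * fact (k - m))"
      using binomial_fact[OF that] by simp
    have "sqrt (fr / (fact m * fact (k - m))) * sqrt (fs / (fact m * fact (k - m)))
        = sqrt (fr * fs) / (fact m * fact (k - m))"
      using fm pos by (simp add: real_sqrt_mult[symmetric] real_sqrt_divide power2_eq_square[symmetric])
    also have "\<dots> = sqrt (fr * fs) / fact k * real (k choose m)"
      using fm by (simp add: b)
    finally have *: "sqrt (fr / (fact m * fact (k - m))) * sqrt (fs / (fact m * fact (k - m)))
        = sqrt (fr * fs) / fact k * real (k choose m)" .
    have sq: "(1 / sqrt (2 ^ k)) * (1 / sqrt (2 ^ k)) = (1 / 2 ^ k :: real)"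
      by (simp add: real_sqrt_mult[symmetric])
    show ?thesis
      unfolding da_amp_Pm fr_def[symmetric] fs_def[symmetric]
      using * sq by (simp add: algebra_simps)
  qed
  hence "(\<Sum>m\<le>k. da_amp k m r * da_amp k m s) = (1 / 2^k) * (sqrt (fr * fs) / fact k) *
          (\<Sum>m\<le>k. real (k choose m) * coeff (Pm k m) r * coeff (Pm k m) s)"
    by (simp add: sum_distrib_left)
  also have "\<dots> = (if r = s then 1 else 0)"
  proof (cases "r = s")
    case True
    have b: "real (k choose r) = fact k / fr"
      using binomial_fact[OF assms(1)] fr_def by simp
    have "fs = fr" using True fr_def fs_def by simp
    hence "sqrt (fr * fs) = fr" using pos by (simp add: power2_eq_square[symmetric])
    thus ?thesis using True pos unfolding key_ident[OF assms]
      by (simp add: b[unfolded True])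
  qed (simp add: key_ident[OF assms])
  finally show ?thesis .
qed

lemma sqrt_binom: 
  assumes "r \<le> k"
  shows "sqrt (fact r * fact (k - r) / (fact k)) * real (k choose r) = sqrt (real (k choose r))"
proof -
  have b: "real (k choose r) = fact k / (fact r * fact (k - r))" using binomial_fact[OF assms] by simp
  have pos: "real (k choose r) > 0" using assms by simp
  have "fact r * fact (k - r) / (fact k) = 1 / real (k choose r)" unfolding b by simp
  hence "sqrt (fact r * fact (k - r) / (fact k)) * real (k choose r) = sqrt (1 / real (k choose r)) * real (k choose r)" by simp
  also have "\<dots> = sqrt (real (k choose r))" using pos
    by (metis real_div_sqrt less_eq_real_def real_sqrt_divide real_sqrt_one times_divide_eq_left mult_1)
  finally show ?thesis .
qed

lemma U0_eq:
  assumes "r \<le> k"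
  shows "da_amp k 0 r = (1 / sqrt (2 ^ k)) * (-1) ^ (k - r) * sqrt (real (k choose r))"
proof -
  have "da_amp k 0 r = (1 / sqrt (2 ^ k)) * (sqrt (fact r * fact (k - r) / (fact k)) * real (k choose r)) * (-1) ^ (k - r)"
    unfolding da_amp_def by simp
  thus ?thesis unfolding sqrt_binom[OF assms] by simp
qed

lemma Uk_eq:
  assumes "r \<le> k"
  shows "da_amp k k r = (1 / sqrt (2 ^ k)) * sqrt (real (k choose r))"
proof -
  have s: "(\<Sum>j\<le>r. real (k choose j) * real (0 choose (r - j)) * (-1) ^ (0 - (r - j)))
      = real (k choose r)"
  proof -
    have "(\<Sum>j\<le>r. real (k choose j) * real (0 choose (r - j)) * (-1) ^ (0 - (r - j)))
        = (\<Sum>j\<le>r. if j = r then real (k choose j) else 0)"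
      by (intro sum.cong refl) auto
    thus ?thesis by simp
  qed
  have "da_amp k k r = (1 / sqrt (2 ^ k)) * (sqrt (fact r * fact (k - r) / (fact k)) * real (k choose r))"
    unfolding da_amp_def using assms s by (simp add: min_absorb2 mult.commute)
  thus ?thesis unfolding sqrt_binom[OF assms] by simp
qed

lemma sq_sk: "(1 / sqrt (2 ^ k :: real)) * (1 / sqrt (2 ^ k)) = 1 / 2 ^ k"
  by (simp add: real_sqrt_mult[symmetric])

lemma U0_norm: "(\<Sum>r\<le>k. da_amp k 0 r * da_amp k 0 r) = 1"
proof -
  have "(\<Sum>r\<le>k. da_amp k 0 r * da_amp k 0 r) = (\<Sum>r\<le>k. real (k choose r) / 2 ^ k)"
  proof (intro sum.cong refl)
    fix r assume "r \<in> {..k}"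
    hence r: "r \<le> k" by simp
    have "da_amp k 0 r * da_amp k 0 r = ((1 / sqrt (2 ^ k)) * (1 / sqrt (2 ^ k))) * ((-1) ^ (k - r) * (-1) ^ (k - r)) * (sqrt (real (k choose r)) * sqrt (real (k choose r)))"
      unfolding U0_eq[OF r] by (simp add: algebra_simps)
    also have "\<dots> = real (k choose r) / 2 ^ k"
    proof -
      have "(-1::real) ^ (k - r) * (-1) ^ (k - r) = 1" by (simp add: power_mult_distrib[symmetric])
      thus ?thesis unfolding sq_sk by simp
    qed
    finally show "da_amp k 0 r * da_amp k 0 r = real (k choose r) / 2 ^ k" .
  qed
  also have "\<dots> = 1" by (simp add: sum_divide_distrib[symmetric] choose_row_sum[of k, symmetric] of_nat_sum[symmetric] del: of_nat_sum)
  finally show ?thesis .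
qed

lemma Uk_norm: "(\<Sum>r\<le>k. da_amp k k r * da_amp k k r) = 1"
proof -
  have "(\<Sum>r\<le>k. da_amp k k r * da_amp k k r) = (\<Sum>r\<le>k. real (k choose r) / 2 ^ k)"
  proof (intro sum.cong refl)
    fix r assume "r \<in> {..k}"
    hence r: "r \<le> k" by simp
    have "da_amp k k r * da_amp k k r = ((1 / sqrt (2 ^ k)) * (1 / sqrt (2 ^ k))) * (sqrt (real (k choose r)) * sqrt (real (k choose r)))"
      unfolding Uk_eq[OF r] by (simp add: algebra_simps)
    also have "\<dots> = real (k choose r) / 2 ^ k" unfolding sq_sk by simp
    finally show "da_amp k k r * da_amp k k r = real (k choose r) / 2 ^ k" .
  qed
  also have "\<dots> = 1" by (simp add: sum_divide_distrib[symmetric] choose_row_sum[of k, symmetric] of_nat_sum[symmetric] del: of_nat_sum)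
  finally show ?thesis .
qed

lemma U0Uk_orth:
  assumes "k \<ge> 1"
  shows "(\<Sum>r\<le>k. da_amp k 0 r * da_amp k k r) = 0"
proof -
  have "(\<Sum>r\<le>k. da_amp k 0 r * da_amp k k r) = (\<Sum>r\<le>k. real (k choose r) * 1 ^ r * (-1) ^ (k - r)) / 2 ^ k"
    unfolding sum_divide_distrib
  proof (intro sum.cong refl)
    fix r assume "r \<in> {..k}"
    hence r: "r \<le> k" by simp
    have "da_amp k 0 r * da_amp k k r = ((1 / sqrt (2 ^ k)) * (1 / sqrt (2 ^ k))) * (-1) ^ (k - r) * (sqrt (real (k choose r)) * sqrt (real (k choose r)))"
      unfolding Uk_eq[OF r] U0_eq[OF r] by (simp add: algebra_simps)
    also have "\<dots> = real (k choose r) * 1 ^ r * (-1) ^ (k - r) / 2 ^ k" unfolding sq_sk by simp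
    finally show "da_amp k 0 r * da_amp k k r = real (k choose r) * 1 ^ r * (-1) ^ (k - r) / 2 ^ k" .
  qed
  also have "(\<Sum>r\<le>k. real (k choose r) * 1 ^ r * (-1) ^ (k - r)) = (1 + (-1::real)) ^ k"
    by (rule binomial_ring[symmetric])
  also have "\<dots> = 0" using assms by simp
  finally show ?thesis by simp
qed

lemma quad2_nonneg:
  fixes P1 P2 K a b :: real
  assumes "0 \<le> P1" "0 \<le> P2" "K * K \<le> P1 * P2"
  shows "0 \<le> P1 * a * a - 2 * K * a * b + P2 * b * b"
proof (cases "P1 = 0")
  case True
  hence "K = 0" using assms by (simp add: mult_le_0_iff) (metis mult_eq_0_iff not_square_less_zero order_antisym_conv)
  thus ?thesis using True assms by (simp add: mult.assoc)
next
  case False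
  hence "P1 > 0" using assms by simp
  have "P1 * (P1 * a * a - 2 * K * a * b + P2 * b * b) = (P1 * a - K * b)^2 + (P1 * P2 - K * K) * b * b"
    by (simp add: algebra_simps power2_eq_square)
  also have "\<dots> \<ge> 0"
  proof -
    have "0 \<le> (P1 * P2 - K * K) * (b * b)" using assms by simp
    thus ?thesis by (simp add: mult.assoc)
  qed
  finally show ?thesis using \<open>P1 > 0\<close> by (simp add: zero_le_mult_iff)
qed

lemma pair_ineq:
  fixes p c mu a b :: real
  assumes p: "0 \<le> p" "p \<le> 1" and c: "c * c < 1"
    and mu: "mu \<ge> 1/2 + 1/2 * sqrt (1 - 4 * p * (1 - p) * (1 - c * c))"
  shows "(1 - c * c) * (p * a * a + (1 - p) * b * b) \<le> mu * (a * a + b * b - 2 * c * a * b)"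
proof -
  define D where "D = 1 - 4 * p * (1 - p) * (1 - c * c)"
  define m0 where "m0 = 1/2 + 1/2 * sqrt D"
  have pp1: "0 \<le> p * (1 - p)" using p by simp
  have "1/4 - p * (1 - p) = (p - 1/2)^2" by (simp add: power2_eq_square algebra_simps)
  hence pp2: "p * (1 - p) \<le> 1/4" by (smt (verit) zero_le_power2)
  note pp = pp1 pp2
  have cc: "0 < 1 - c * c" "1 - c * c \<le> 1" using c by auto
  have Dge: "D \<ge> (2 * p - 1)^2"
  proof -
    have "4 * p * (1 - p) * (1 - c * c) \<le> 4 * p * (1 - p)"
      using pp cc by (simp add: mult_left_le)
    thus ?thesis unfolding D_def by (simp add: power2_eq_square algebra_simps)
  qed
  hence D0: "D \<ge> 0" by (smt (verit) zero_le_power2)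
  have sD: "sqrt D \<ge> \<bar>2 * p - 1\<bar>" using Dge real_sqrt_abs real_sqrt_le_mono by metis
  have sq: "sqrt D * sqrt D = D" using D0 by simp
  have "m0 * m0 - m0 = (sqrt D * sqrt D - 1) / 4"
    unfolding m0_def by (simp add: algebra_simps)
  hence eq: "m0 * m0 - m0 + p * (1 - p) * (1 - c * c) = 0"
    unfolding sq by (simp add: D_def algebra_simps)
  have P1: "0 \<le> m0 - (1 - c * c) * p" 
  proof -
    have "(1 - c * c) * p \<le> p" using cc p by (simp add: mult_left_le_one_le)
    moreover have "p \<le> m0" unfolding m0_def using sD by linarith
    ultimately show ?thesis by linarith
  qed
  have P2: "0 \<le> m0 - (1 - c * c) * (1 - p)"
  proof -
    have "(1 - c * c) * (1 - p) \<le> 1 - p" using cc p by (simp add: mult_left_le_one_le)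
    moreover have "1 - p \<le> m0" unfolding m0_def using sD by linarith
    ultimately show ?thesis by linarith
  qed
  have KP: "(m0 * c) * (m0 * c) \<le> (m0 - (1 - c * c) * p) * (m0 - (1 - c * c) * (1 - p))"
  proof -
    have "(m0 - (1 - c * c) * p) * (m0 - (1 - c * c) * (1 - p)) - (m0 * c) * (m0 * c)
        = (1 - c * c) * (m0 * m0 - m0 + p * (1 - p) * (1 - c * c))"
      by (simp add: algebra_simps)
    thus ?thesis using eq by simp
  qed
  have main: "0 \<le> (m0 - (1 - c * c) * p) * a * a - 2 * (m0 * c) * a * b + (m0 - (1 - c * c) * (1 - p)) * b * b"
    by (rule quad2_nonneg[OF P1 P2 KP])
  have nn: "0 \<le> a * a + b * b - 2 * c * a * b"
  proof -
    have "0 \<le> 1 * a * a - 2 * c * a * b + 1 * b * b"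
      by (rule quad2_nonneg) (use c in auto)
    thus ?thesis by simp
  qed
  have "mu \<ge> m0" using mu unfolding m0_def D_def .
  hence "m0 * (a * a + b * b - 2 * c * a * b) \<le> mu * (a * a + b * b - 2 * c * a * b)"
    using nn by (simp add: mult_right_mono)
  moreover have "(1 - c * c) * (p * a * a + (1 - p) * b * b) \<le> m0 * (a * a + b * b - 2 * c * a * b)"
    using main by (simp add: algebra_simps)
  ultimately show ?thesis by linarith
qed

lemma pair_ineq2:
  fixes p t mu a b :: real
  assumes p: "0 \<le> p" "p \<le> 1" and c: "2 * t * t < 1"
    and mu: "mu \<ge> 1/2 + 1/2 * sqrt (1 - 4 * p * (1 - p) * (1 - 2 * t * t))"
  shows "(1 - 2 * t * t) * (p * a * a + (1 - p) * (b * b / 2)) \<le> mu * (a * a + b * b / 2 - 2 * t * a * b)"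
proof -
  have s2: "sqrt 2 * sqrt 2 = (2::real)" by simp
  have cc: "sqrt 2 * t * (sqrt 2 * t) = 2 * t * t" using s2 by (simp add: algebra_simps)
  have bb: "b / sqrt 2 * (b / sqrt 2) = b * b / 2" using s2 by (simp add: field_simps)
  have ab: "2 * (sqrt 2 * t) * a * (b / sqrt 2) = 2 * t * a * b" by (simp add: field_simps)
  have "(1 - sqrt 2 * t * (sqrt 2 * t)) * (p * a * a + (1 - p) * (b / sqrt 2) * (b / sqrt 2))
     \<le> mu * (a * a + b / sqrt 2 * (b / sqrt 2) - 2 * (sqrt 2 * t) * a * (b / sqrt 2))"
  proof -
    have c': "sqrt 2 * t * (sqrt 2 * t) < 1" unfolding cc by (rule c)
    have mu': "mu \<ge> 1/2 + 1/2 * sqrt (1 - 4 * p * (1 - p) * (1 - sqrt 2 * t * (sqrt 2 * t)))"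
      unfolding cc by (rule mu)
    show ?thesis by (rule pair_ineq[OF p c' mu'])
  qed
  thus ?thesis unfolding cc bb ab by (simp add: mult.assoc)
qed

lemma rad_nonneg:
  fixes p e :: real
  assumes "0 \<le> p" "p \<le> 1" "0 \<le> e" "e \<le> 1"
  shows "0 \<le> 1 - 4 * p * (1 - p) * e"
proof -
  have "4 * p * (1 - p) = 1 - 4 * (p - 1/2)^2" by (simp add: power2_eq_square algebra_simps)
  hence a: "4 * p * (1 - p) \<le> 1" using zero_le_power2[of "p - 1/2"] by linarith
  have "4 * p * (1 - p) * e \<le> 1 * 1"
    by (rule mult_mono) (use a assms in auto)
  thus ?thesis by simp
qed

lemma final_odd:
  fixes p t mu n2 A B C D :: real
  assumes p: "0 \<le> p" "p \<le> 1" and c: "2 * t * t < 1"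
    and mu: "mu = 1/2 + 1/2 * sqrt (1 - 4 * p * (1 - p) * (1 - 2 * t * t))"
    and bes: "\<And>al be ga de. 2 * (al * A + be * B + ga * C + de * D)
        - (al * al + be * be + ga * ga + de * de + 2 * t * (- (al * ga) + al * de + be * ga + be * de)) \<le> n2"
  shows "p * (A * A + B * B) + (1 - p) * (C * C + D * D) \<le> mu * n2"
proof -
  define d where "d = 1 - 2 * t * t"
  have d: "d > 0" using c d_def by simp
  define R where "R = (A*A + B*B + C*C + D*D - 2*t*A*(D - C) - 2*t*B*(D + C)) / d"
  define a1 where "a1 = A - t*(D - C)"
  define b1 where "b1 = B - t*(D + C)"
  define g1 where "g1 = C + t*(A - B)"
  define e1 where "e1 = D - t*(A + B)"
  define X where "X = A*A + B*B + C*C + D*D - 2*t*A*(D - C) - 2*t*B*(D + C)"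
  have poly: "2 * d * (a1 * A + b1 * B + g1 * C + e1 * D)
     - (a1 * a1 + b1 * b1 + g1 * g1 + e1 * e1 + 2 * t * (- (a1 * g1) + a1 * e1 + b1 * g1 + b1 * e1)) = d * X"
    unfolding a1_def b1_def g1_def e1_def X_def d_def by algebra
  have "2 * ((a1/d) * A + (b1/d) * B + (g1/d) * C + (e1/d) * D)
        - ((a1/d) * (a1/d) + (b1/d) * (b1/d) + (g1/d) * (g1/d) + (e1/d) * (e1/d)
           + 2 * t * (- ((a1/d) * (g1/d)) + (a1/d) * (e1/d) + (b1/d) * (g1/d) + (b1/d) * (e1/d)))
      = (2 * d * (a1 * A + b1 * B + g1 * C + e1 * D)
     - (a1 * a1 + b1 * b1 + g1 * g1 + e1 * e1 + 2 * t * (- (a1 * g1) + a1 * e1 + b1 * g1 + b1 * e1))) / (d * d)"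
    using d by (simp add: field_simps)
  also have "\<dots> = R" unfolding poly R_def X_def[symmetric] using d by simp
  finally have "2 * ((a1/d) * A + (b1/d) * B + (g1/d) * C + (e1/d) * D)
        - ((a1/d) * (a1/d) + (b1/d) * (b1/d) + (g1/d) * (g1/d) + (e1/d) * (e1/d)
           + 2 * t * (- ((a1/d) * (g1/d)) + (a1/d) * (e1/d) + (b1/d) * (g1/d) + (b1/d) * (e1/d))) = R" .
  hence Rn: "R \<le> n2" using bes by metis
  have mu0: "mu \<ge> 0" unfolding mu using rad_nonneg[OF p, of "1 - 2 * t * t"] c by simp
  have p1: "d * (p * A * A + (1 - p) * ((D - C) * (D - C) / 2)) \<le> mu * (A * A + (D - C) * (D - C) / 2 - 2 * t * A * (D - C))"
    unfolding d_def by (rule pair_ineq2) (use p c mu in auto)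
  have p2: "d * (p * B * B + (1 - p) * ((D + C) * (D + C) / 2)) \<le> mu * (B * B + (D + C) * (D + C) / 2 - 2 * t * B * (D + C))"
    unfolding d_def by (rule pair_ineq2) (use p c mu in auto)
  have "d * (p * (A * A + B * B) + (1 - p) * (C * C + D * D)) \<le> mu * (d * R)"
  proof -
    have "d * (p * (A * A + B * B) + (1 - p) * (C * C + D * D))
        = d * (p * A * A + (1 - p) * ((D - C) * (D - C) / 2)) + d * (p * B * B + (1 - p) * ((D + C) * (D + C) / 2))"
      by algebra
    also have "\<dots> \<le> mu * (A * A + (D - C) * (D - C) / 2 - 2 * t * A * (D - C)) + mu * (B * B + (D + C) * (D + C) / 2 - 2 * t * B * (D + C))"
      using p1 p2 by linarith
    also have "\<dots> = mu * (d * R)"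
    proof -
      have "d * R = X" unfolding R_def X_def using d by simp
      moreover have "(A * A + (D - C) * (D - C) / 2 - 2 * t * A * (D - C)) + (B * B + (D + C) * (D + C) / 2 - 2 * t * B * (D + C)) = X"
        unfolding X_def by (simp add: algebra_simps add_divide_distrib[symmetric])
      ultimately show ?thesis by (simp only: distrib_left[symmetric])
    qed
    finally show ?thesis .
  qed
  also have "\<dots> \<le> mu * (d * n2)" using Rn d mu0 by (simp add: mult_left_mono)
  finally have "d * (p * (A * A + B * B) + (1 - p) * (C * C + D * D)) \<le> d * (mu * n2)" by (simp add: algebra_simps)
  thus ?thesis using d by simp
qed

lemma final_even:
  fixes p t mu n2 A B C D :: real
  assumes p: "0 \<le> p" "p \<le> 1" and c: "4 * t * t < 1"
    and mu: "mu = 1/2 + 1/2 * sqrt (1 - 4 * p * (1 - p) * (1 - 4 * t * t))"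
    and bes: "\<And>al be ga de. 2 * (al * A + be * B + ga * C + de * D)
        - (al * al + be * be + ga * ga + de * de + 2 * t * (al * ga + al * de + be * ga + be * de)) \<le> n2"
  shows "p * (A * A + B * B) + (1 - p) * (C * C + D * D) \<le> mu * n2"
proof -
  define d where "d = 1 - 4 * t * t"
  have d: "d > 0" using c d_def by simp
  define a1 where "a1 = (A + B) - 2*t*(D + C) + d*(A - B)"
  define b1 where "b1 = (A + B) - 2*t*(D + C) - d*(A - B)"
  define g1 where "g1 = (D + C) - 2*t*(A + B) - d*(D - C)"
  define e1 where "e1 = (D + C) - 2*t*(A + B) + d*(D - C)"
  define X where "X = (A + B)*(A + B) + (D + C)*(D + C) - 4*t*(A + B)*(D + C) + d*((A - B)*(A - B) + (D - C)*(D - C))"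
  have poly: "2 * (2 * d) * (a1 * A + b1 * B + g1 * C + e1 * D)
     - (a1 * a1 + b1 * b1 + g1 * g1 + e1 * e1 + 2 * t * (a1 * g1 + a1 * e1 + b1 * g1 + b1 * e1)) = (2 * d) * X"
    unfolding a1_def b1_def g1_def e1_def X_def d_def by algebra
  define dd where "dd = 2 * d"
  have dd: "dd > 0" using d dd_def by simp
  have "2 * ((a1/dd) * A + (b1/dd) * B + (g1/dd) * C + (e1/dd) * D)
        - ((a1/dd) * (a1/dd) + (b1/dd) * (b1/dd) + (g1/dd) * (g1/dd) + (e1/dd) * (e1/dd)
           + 2 * t * ((a1/dd) * (g1/dd) + (a1/dd) * (e1/dd) + (b1/dd) * (g1/dd) + (b1/dd) * (e1/dd)))
      = (2 * dd * (a1 * A + b1 * B + g1 * C + e1 * D)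
     - (a1 * a1 + b1 * b1 + g1 * g1 + e1 * e1 + 2 * t * (a1 * g1 + a1 * e1 + b1 * g1 + b1 * e1))) / (dd * dd)"
    using dd by (simp add: field_simps)
  also have "\<dots> = X / dd" unfolding dd_def[symmetric] poly[unfolded dd_def[symmetric]] using dd by simp
  finally have "X / dd \<le> n2" using bes by metis
  hence Xn: "X \<le> dd * n2" using dd by (simp add: field_simps)
  have mu0: "mu \<ge> 0" unfolding mu using rad_nonneg[OF p, of "1 - 4 * t * t"] c by simp
  have p1: "(1 - 2 * t * (2 * t)) * (p * (A + B) * (A + B) + (1 - p) * (D + C) * (D + C))
      \<le> mu * ((A + B) * (A + B) + (D + C) * (D + C) - 2 * (2 * t) * (A + B) * (D + C))"
    by (rule pair_ineq) (use p c mu in \<open>auto simp: algebra_simps\<close>)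
  have mu2: "mu \<ge> 1/2 + 1/2 * sqrt (1 - 4 * p * (1 - p) * (1 - 0 * 0))"
  proof -
    have h: "0 \<le> p * (1 - p) * (t * t)" using p by simp
    have "1 - 4 * p * (1 - p) * (1 - 4 * t * t) = 1 - 4 * p * (1 - p) * 1 + 16 * (p * (1 - p) * (t * t))"
      by algebra
    hence "1 - 4 * p * (1 - p) * 1 \<le> 1 - 4 * p * (1 - p) * (1 - 4 * t * t)"
      using h by linarith
    thus ?thesis unfolding mu by simp
  qed
  have p2: "(1 - 0 * 0) * (p * (A - B) * (A - B) + (1 - p) * (D - C) * (D - C))
      \<le> mu * ((A - B) * (A - B) + (D - C) * (D - C) - 2 * 0 * (A - B) * (D - C))"
    by (rule pair_ineq[OF p _ mu2]) simp
  have "dd * (p * (A * A + B * B) + (1 - p) * (C * C + D * D))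
      = d * (p * (A + B) * (A + B) + (1 - p) * (D + C) * (D + C)) + d * (p * (A - B) * (A - B) + (1 - p) * (D - C) * (D - C))"
    unfolding dd_def by algebra
  also have "\<dots> \<le> mu * ((A + B) * (A + B) + (D + C) * (D + C) - 2 * (2 * t) * (A + B) * (D + C))
      + d * (mu * ((A - B) * (A - B) + (D - C) * (D - C)))"
  proof (rule add_mono)
    show "d * (p * (A + B) * (A + B) + (1 - p) * (D + C) * (D + C))
        \<le> mu * ((A + B) * (A + B) + (D + C) * (D + C) - 2 * (2 * t) * (A + B) * (D + C))"
      using p1 unfolding d_def by (simp add: mult.assoc)
    have "p * (A - B) * (A - B) + (1 - p) * (D - C) * (D - C) \<le> mu * ((A - B) * (A - B) + (D - C) * (D - C))"
      using p2 by simp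
    thus "d * (p * (A - B) * (A - B) + (1 - p) * (D - C) * (D - C))
        \<le> d * (mu * ((A - B) * (A - B) + (D - C) * (D - C)))"
      using d by (simp add: mult_left_mono)
  qed
  also have "\<dots> = mu * X" unfolding X_def by (simp add: algebra_simps)
  also have "\<dots> \<le> mu * (dd * n2)" using Xn mu0 by (simp add: mult_left_mono)
  finally have "dd * (p * (A * A + B * B) + (1 - p) * (C * C + D * D)) \<le> dd * (mu * n2)" by (simp add: algebra_simps)
  thus ?thesis using dd by simp
qed

definition Mk :: "real \<Rightarrow> nat \<Rightarrow> nat \<Rightarrow> nat \<Rightarrow> real" where
  "Mk pz k r s = pz * (if r = s \<and> 1 \<le> r \<and> 1 \<le> k - r then 1 else 0)
     + (1 - pz) * (\<Sum>m\<in>{1..k-1}. da_amp k m r * da_amp k m s)"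
definition qfM :: "real \<Rightarrow> nat \<Rightarrow> (nat \<Rightarrow> real) \<Rightarrow> real" where
  "qfM pz k x = (\<Sum>r\<le>k. \<Sum>s\<le>k. x r * Mk pz k r s * x s)"
definition nn2 :: "nat \<Rightarrow> (nat \<Rightarrow> real) \<Rightarrow> real" where
  "nn2 k x = (\<Sum>r\<le>k. x r * x r)"
definition proj :: "nat \<Rightarrow> nat \<Rightarrow> (nat \<Rightarrow> real) \<Rightarrow> real" where
  "proj k m x = (\<Sum>r\<le>k. da_amp k m r * x r)"

lemma qfM_eq:
  "qfM pz k x = pz * (\<Sum>r\<le>k. if 1 \<le> r \<and> 1 \<le> k - r then x r * x r else 0)
      + (1 - pz) * (\<Sum>m\<in>{1..k-1}. proj k m x * proj k m x)"
proof -
  have "qfM pz k x = pz * (\<Sum>r\<le>k. \<Sum>s\<le>k. x r * (if r = s \<and> 1 \<le> r \<and> 1 \<le> k - r then 1 else 0) * x s)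
      + (1 - pz) * (\<Sum>r\<le>k. \<Sum>s\<le>k. \<Sum>m\<in>{1..k-1}. x r * (da_amp k m r * da_amp k m s) * x s)"
    unfolding qfM_def Mk_def
    by (simp add: algebra_simps sum.distrib sum_distrib_left sum_distrib_right)
  also have "(\<Sum>r\<le>k. \<Sum>s\<le>k. x r * (if r = s \<and> 1 \<le> r \<and> 1 \<le> k - r then 1 else 0) * x s)
      = (\<Sum>r\<le>k. if 1 \<le> r \<and> 1 \<le> k - r then x r * x r else 0)"
  proof (intro sum.cong refl)
    fix r assume "r \<in> {..k}"
    have "(\<Sum>s\<le>k. x r * (if r = s \<and> 1 \<le> r \<and> 1 \<le> k - r then 1 else 0) * x s)
        = (\<Sum>s\<le>k. if s = r then (if 1 \<le> r \<and> 1 \<le> k - r then x r * x r else 0) else 0)"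
      by (intro sum.cong refl) auto
    thus "(\<Sum>s\<le>k. x r * (if r = s \<and> 1 \<le> r \<and> 1 \<le> k - r then 1 else 0) * x s)
        = (if 1 \<le> r \<and> 1 \<le> k - r then x r * x r else 0)" using \<open>r \<in> {..k}\<close> by simp
  qed
  also have "(\<Sum>r\<le>k. \<Sum>s\<le>k. \<Sum>m\<in>{1..k-1}. x r * (da_amp k m r * da_amp k m s) * x s)
      = (\<Sum>m\<in>{1..k-1}. proj k m x * proj k m x)"
  proof -
    have "(\<Sum>m\<in>{1..k-1}. proj k m x * proj k m x)
        = (\<Sum>m\<in>{1..k-1}. \<Sum>r\<le>k. \<Sum>s\<le>k. (da_amp k m r * x r) * (da_amp k m s * x s))"
      by (simp add: proj_def sum_product)
    also have "\<dots> = (\<Sum>r\<le>k. \<Sum>m\<in>{1..k-1}. \<Sum>s\<le>k. (da_amp k m r * x r) * (da_amp k m s * x s))"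
      by (rule sum.swap)
    also have "\<dots> = (\<Sum>r\<le>k. \<Sum>s\<le>k. \<Sum>m\<in>{1..k-1}. (da_amp k m r * x r) * (da_amp k m s * x s))"
      by (rule sum.cong[OF refl], rule sum.swap)
    finally show ?thesis by (simp add: mult_ac)
  qed
  finally show ?thesis .
qed

lemma complete_proj: "(\<Sum>m\<le>k. proj k m x * proj k m x) = nn2 k x"
proof -
  have "(\<Sum>m\<le>k. proj k m x * proj k m x) = (\<Sum>r\<le>k. \<Sum>s\<le>k. x r * x s * (\<Sum>m\<le>k. da_amp k m r * da_amp k m s))"
  proof -
    have "(\<Sum>m\<le>k. proj k m x * proj k m x)
        = (\<Sum>m\<le>k. \<Sum>r\<le>k. \<Sum>s\<le>k. (da_amp k m r * x r) * (da_amp k m s * x s))"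
      by (simp add: proj_def sum_product)
    also have "\<dots> = (\<Sum>r\<le>k. \<Sum>m\<le>k. \<Sum>s\<le>k. (da_amp k m r * x r) * (da_amp k m s * x s))"
      by (rule sum.swap)
    also have "\<dots> = (\<Sum>r\<le>k. \<Sum>s\<le>k. \<Sum>m\<le>k. (da_amp k m r * x r) * (da_amp k m s * x s))"
      by (rule sum.cong[OF refl], rule sum.swap)
    finally show ?thesis by (simp add: sum_distrib_left mult_ac)
  qed
  also have "\<dots> = (\<Sum>r\<le>k. \<Sum>s\<le>k. if s = r then x r * x r else 0)"
    by (intro sum.cong refl) (auto simp: da_complete)
  also have "\<dots> = nn2 k x" unfolding nn2_def by simp
  finally show ?thesis .
qed

lemma sum_split_ends:
  fixes f :: "nat \<Rightarrow> real"
  assumes "k \<ge> 1"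
  shows "(\<Sum>r\<le>k. f r) = f 0 + f k + (\<Sum>r\<in>{1..k-1}. f r)"
proof -
  have "{..k} = insert 0 (insert k {1..k-1})" using assms by auto
  thus ?thesis using assms by simp
qed

lemma qfM_eq2:
  assumes "k \<ge> 1"
  shows "qfM pz k x = nn2 k x - (pz * (x 0 * x 0 + x k * x k)
     + (1 - pz) * (proj k 0 x * proj k 0 x + proj k k x * proj k k x))"
proof -
  have a: "(\<Sum>r\<le>k. if 1 \<le> r \<and> 1 \<le> k - r then x r * x r else 0) = nn2 k x - x 0 * x 0 - x k * x k"
  proof -
    have "(\<Sum>r\<le>k. if 1 \<le> r \<and> 1 \<le> k - r then x r * x r else 0) = (\<Sum>r\<in>{1..k-1}. x r * x r)"
      using assms by (subst sum_split_ends) (auto intro!: sum.cong)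
    thus ?thesis unfolding nn2_def using sum_split_ends[OF assms, of "\<lambda>r. x r * x r"] by simp
  qed
  have b: "(\<Sum>m\<in>{1..k-1}. proj k m x * proj k m x) = nn2 k x - proj k 0 x * proj k 0 x - proj k k x * proj k k x"
    using sum_split_ends[OF assms, of "\<lambda>m. proj k m x * proj k m x"] complete_proj[of k x] by simp
  show ?thesis unfolding qfM_eq a b by (simp add: algebra_simps)
qed

lemma qfM_nonneg:
  assumes "0 \<le> pz" "pz \<le> 1"
  shows "0 \<le> qfM pz k x"
proof -
  have a: "0 \<le> (\<Sum>r\<le>k. if 1 \<le> r \<and> 1 \<le> k - r then x r * x r else 0)" by (intro sum_nonneg) auto
  have b: "0 \<le> (\<Sum>m\<in>{1..k-1}. proj k m x * proj k m x)" by (intro sum_nonneg) simp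
  show ?thesis unfolding qfM_eq using assms a b by simp
qed

lemma qfM_le:
  assumes "0 \<le> pz" "pz \<le> 1"
  shows "qfM pz k x \<le> nn2 k x"
proof (cases "k = 0")
  case True
  thus ?thesis unfolding qfM_eq nn2_def by simp
next
  case False
  hence "k \<ge> 1" by simp
  have a: "0 \<le> pz * (x 0 * x 0 + x k * x k)" using assms by simp
  have b: "0 \<le> (1 - pz) * (proj k 0 x * proj k 0 x + proj k k x * proj k k x)" using assms by simp
  show ?thesis unfolding qfM_eq2[OF \<open>k \<ge> 1\<close>] using a b by simp
qed

lemma bessel:
  fixes x y :: "nat \<Rightarrow> real"
  shows "2 * (\<Sum>r\<le>k. x r * y r) - (\<Sum>r\<le>k. y r * y r) \<le> nn2 k x"
proof -
  have "0 \<le> (\<Sum>r\<le>k. (x r - y r) * (x r - y r))" by (intro sum_nonneg) simp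
  also have "\<dots> = nn2 k x - 2 * (\<Sum>r\<le>k. x r * y r) + (\<Sum>r\<le>k. y r * y r)"
    unfolding nn2_def by (simp add: algebra_simps sum.distrib sum_subtractf sum_distrib_left)
  finally show ?thesis by simp
qed

lemma delta_sum:
  fixes z :: "nat \<Rightarrow> real"
  assumes "j \<le> k"
  shows "(\<Sum>r\<le>k. z r * (if r = j then 1 else 0)) = z j"
proof -
  have "(\<Sum>r\<le>k. z r * (if r = j then 1 else 0)) = (\<Sum>r\<le>k. if r = j then z r else 0)"
    by (intro sum.cong) auto
  thus ?thesis using assms by simp
qed

lemma lin4:
  fixes z u v :: "nat \<Rightarrow> real"
  shows "(\<Sum>r\<le>k. z r * (al * (if r = 0 then 1 else 0) + be * (if r = k then 1 else 0) + ga * u r + de * v r))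
    = al * z 0 + be * z k + ga * (\<Sum>r\<le>k. z r * u r) + de * (\<Sum>r\<le>k. z r * v r)"
proof -
  have "(\<Sum>r\<le>k. z r * (al * (if r = 0 then 1 else 0) + be * (if r = k then 1 else 0) + ga * u r + de * v r))
    = al * (\<Sum>r\<le>k. z r * (if r = 0 then 1 else 0)) + be * (\<Sum>r\<le>k. z r * (if r = k then 1 else 0))
      + ga * (\<Sum>r\<le>k. z r * u r) + de * (\<Sum>r\<le>k. z r * v r)"
    by (simp only: sum.distrib sum_distrib_left distrib_left mult.left_commute)
  thus ?thesis by (simp only: delta_sum[of 0 k] delta_sum[of k k] order_refl le0)
qed

lemma qfM_ge:
  assumes k: "k \<ge> 3" and p: "0 \<le> pz" "pz \<le> 1"
  shows "lambda_min pz k * nn2 k x \<le> qfM pz k x"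
proof -
  define t where "t = 1 / sqrt (2 ^ k :: real)"
  define sg where "sg = ((-1::real) ^ k)"
  define A where "A = x 0"
  define B where "B = x k"
  define C where "C = proj k 0 x"
  define D where "D = proj k k x"
  define u where "u r = da_amp k 0 r" for r
  define v where "v r = da_amp k k r" for r
  have k1: "k \<ge> 1" "k \<noteq> 0" using k by auto
  have tt: "t * t = (1/2) ^ k" unfolding t_def sq_sk by (simp add: power_one_over)
  have u0: "u 0 = t * sg" unfolding u_def t_def sg_def using U0_eq[of 0 k] by simp
  have uk: "u k = t" unfolding u_def t_def using U0_eq[of k k] by simp
  have v0: "v 0 = t" unfolding v_def t_def using Uk_eq[of 0 k] by simp
  have vk: "v k = t" unfolding v_def t_def using Uk_eq[of k k] by simp
  have uu: "(\<Sum>r\<le>k. u r * u r) = 1" unfolding u_def by (rule U0_norm)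
  have vv: "(\<Sum>r\<le>k. v r * v r) = 1" unfolding v_def by (rule Uk_norm)
  have uv: "(\<Sum>r\<le>k. u r * v r) = 0" unfolding u_def v_def by (rule U0Uk_orth[OF k1(1)])
  have vu: "(\<Sum>r\<le>k. v r * u r) = 0" using uv by (simp add: mult.commute)
  have Cx: "(\<Sum>r\<le>k. x r * u r) = C" unfolding C_def proj_def u_def by (simp add: mult.commute)
  have Dx: "(\<Sum>r\<le>k. x r * v r) = D" unfolding D_def proj_def v_def by (simp add: mult.commute)
  have bes: "2 * (al * A + be * B + ga * C + de * D)
        - (al * al + be * be + ga * ga + de * de + 2 * t * (sg * (al * ga) + al * de + be * ga + be * de)) \<le> nn2 k x"
    for al be ga de
  proof -
    define y where "y r = al * (if r = 0 then 1 else 0) + be * (if r = k then 1 else 0) + ga * u r + de * v r" for r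
    have xy: "(\<Sum>r\<le>k. x r * y r) = al * A + be * B + ga * C + de * D"
      unfolding y_def lin4 Cx Dx A_def B_def by simp
    have y0: "y 0 = al + ga * t * sg + de * t" unfolding y_def using k1 u0 v0 by simp
    have yk: "y k = be + ga * t + de * t" unfolding y_def using k1 uk vk by simp
    have yu: "(\<Sum>r\<le>k. y r * u r) = al * t * sg + be * t + ga"
    proof -
      have "(\<Sum>r\<le>k. y r * u r) = (\<Sum>r\<le>k. u r * y r)" by (simp add: mult.commute)
      also have "\<dots> = al * u 0 + be * u k + ga * (\<Sum>r\<le>k. u r * u r) + de * (\<Sum>r\<le>k. u r * v r)"
        unfolding y_def lin4 by simp
      finally show ?thesis unfolding u0 uk uu uv by simp
    qed
    have yv: "(\<Sum>r\<le>k. y r * v r) = al * t + be * t + de"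
    proof -
      have "(\<Sum>r\<le>k. y r * v r) = (\<Sum>r\<le>k. v r * y r)" by (simp add: mult.commute)
      also have "\<dots> = al * v 0 + be * v k + ga * (\<Sum>r\<le>k. v r * u r) + de * (\<Sum>r\<le>k. v r * v r)"
        unfolding y_def lin4 by simp
      finally show ?thesis unfolding v0 vk vv vu by simp
    qed
    have yy: "(\<Sum>r\<le>k. y r * y r) = al * y 0 + be * y k + ga * (\<Sum>r\<le>k. y r * u r) + de * (\<Sum>r\<le>k. y r * v r)"
    proof -
      have "(\<Sum>r\<le>k. y r * y r) = (\<Sum>r\<le>k. y r * (al * (if r = 0 then 1 else 0) + be * (if r = k then 1 else 0) + ga * u r + de * v r))"
        unfolding y_def ..
      thus ?thesis unfolding lin4 .
    qed
    have "(\<Sum>r\<le>k. y r * y r) = al * al + be * be + ga * ga + de * de + 2 * t * (sg * (al * ga) + al * de + be * ga + be * de)"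
      unfolding yy y0 yk yu yv by (simp add: algebra_simps)
    thus ?thesis using bessel[where k=k and x=x and y=y] unfolding xy by simp
  qed
  define Q where "Q = pz * (A * A + B * B) + (1 - pz) * (C * C + D * D)"
  have qf: "qfM pz k x = nn2 k x - Q" unfolding qfM_eq2[OF k1(1)] Q_def A_def B_def C_def D_def ..
  have pk: "(2::real) ^ k \<ge> 2 ^ 3" using k by (intro power_increasing) auto
  show ?thesis
  proof (cases "odd k")
    case True
    hence sg1: "sg = -1" unfolding sg_def by simp
    define mu where "mu = 1/2 + 1/2 * sqrt (1 - 4 * pz * (1 - pz) * (1 - 2 * t * t))"
    have c: "2 * t * t < 1"
    proof -
      have "2 * t * t = 2 / 2 ^ k" using tt by (simp add: mult.assoc power_one_over)
      thus ?thesis using pk by simp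
    qed
    have "Q \<le> mu * nn2 k x" unfolding Q_def
      by (rule final_odd[OF p c mu_def]) (use bes[unfolded sg1] in simp)
    moreover have "lambda_min pz k = 1 - mu"
    proof -
      have "(2 * pz - 1)^2 + 8 * (1/2)^k * (pz - pz^2) = 1 - 4 * pz * (1 - pz) * (1 - 2 * t * t)"
        unfolding tt[symmetric] by (simp add: power2_eq_square algebra_simps)
      thus ?thesis unfolding lambda_min_def mu_def using True by simp
    qed
    ultimately show ?thesis unfolding qf by (simp add: left_diff_distrib)
  next
    case False
    hence sg1: "sg = 1" unfolding sg_def by simp
    define mu where "mu = 1/2 + 1/2 * sqrt (1 - 4 * pz * (1 - pz) * (1 - 4 * t * t))"
    have k4: "k \<ge> 4" using k False by presburger
    have pk4: "(2::real) ^ k \<ge> 2 ^ 4" using k4 by (intro power_increasing) auto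
    have c: "4 * t * t < 1"
    proof -
      have "4 * t * t = 4 / 2 ^ k" using tt by (simp add: mult.assoc power_one_over)
      thus ?thesis using pk4 by simp
    qed
    have "Q \<le> mu * nn2 k x" unfolding Q_def
      by (rule final_even[OF p c mu_def]) (use bes[unfolded sg1] in simp)
    moreover have "lambda_min pz k = 1 - mu"
    proof -
      have "(2 * pz - 1)^2 + 16 * (1/2)^k * (pz - pz^2) = 1 - 4 * pz * (1 - pz) * (1 - 4 * t * t)"
        unfolding tt[symmetric] by (simp add: power2_eq_square algebra_simps)
      thus ?thesis unfolding lambda_min_def mu_def using False by simp
    qed
    ultimately show ?thesis unfolding qf by (simp add: left_diff_distrib)
  qed
qed

definition quadf :: "'a set \<Rightarrow> ('a \<Rightarrow> 'a \<Rightarrow> real) \<Rightarrow> ('a \<Rightarrow> real) \<Rightarrow> real" where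
  "quadf I A v = (\<Sum>a\<in>I. \<Sum>b\<in>I. v a * A a b * v b)"
definition trf :: "'a set \<Rightarrow> ('a \<Rightarrow> 'a \<Rightarrow> real) \<Rightarrow> ('a \<Rightarrow> 'a \<Rightarrow> real) \<Rightarrow> real" where
  "trf I A B = (\<Sum>a\<in>I. \<Sum>b\<in>I. A a b * B b a)"
definition psdf :: "'a set \<Rightarrow> ('a \<Rightarrow> 'a \<Rightarrow> real) \<Rightarrow> bool" where
  "psdf I A \<longleftrightarrow> (\<forall>a\<in>I. \<forall>b\<in>I. A a b = A b a) \<and> (\<forall>v. 0 \<le> quadf I A v)"

lemma quadf_insert:
  assumes "finite F" "x \<notin> F"
  shows "quadf (insert x F) A v = v x * A x x * v x + (\<Sum>b\<in>F. v x * A x b * v b)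
     + (\<Sum>a\<in>F. v a * A a x * v x) + quadf F A v"
  using assms unfolding quadf_def by (simp add: sum.distrib)


lemma quadf_restrict:
  assumes "finite I" "J \<subseteq> I" "\<And>a. a \<in> I - J \<Longrightarrow> v a = 0"
  shows "quadf I A v = quadf J A v"
proof -
  have "quadf I A v = (\<Sum>a\<in>I. \<Sum>b\<in>J. v a * A a b * v b)"
    unfolding quadf_def
    by (intro sum.cong refl sum.mono_neutral_right) (use assms finite_subset in auto)
  also have "\<dots> = quadf J A v"
    unfolding quadf_def
    by (intro sum.mono_neutral_right) (use assms in auto)
  finally show ?thesis .
qed

lemma trf_insert:
  assumes "finite F" "x \<notin> F"
  shows "trf (insert x F) A B = A x x * B x x + (\<Sum>b\<in>F. A x b * B b x)
     + (\<Sum>a\<in>F. A a x * B x a) + trf F A B"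
  using assms unfolding trf_def by (simp add: sum.distrib)

lemma psdf_insertD:
  assumes "finite F" "x \<notin> F" "psdf (insert x F) A"
  shows "psdf F A"
  unfolding psdf_def
proof (intro conjI allI)
  show "\<forall>a\<in>F. \<forall>b\<in>F. A a b = A b a" using assms(3) unfolding psdf_def by auto
  fix v
  have "0 \<le> quadf (insert x F) A (v(x := 0))" using assms(3) unfolding psdf_def by auto
  also have "quadf (insert x F) A (v(x := 0)) = quadf F A v"
    unfolding quadf_insert[OF assms(1,2)] using assms(2) unfolding quadf_def
    by (auto intro!: sum.cong)
  finally show "0 \<le> quadf F A v" .
qed

lemma psdf_diag:
  assumes "psdf I A" "x \<in> I" "finite I"
  shows "0 \<le> A x x"
proof -
  have "0 \<le> quadf I A (\<lambda>a. if a = x then 1 else 0)" using assms unfolding psdf_def by auto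
  also have "\<dots> = quadf {x} A (\<lambda>a. if a = x then 1 else 0)"
    by (rule quadf_restrict) (use assms in auto)
  also have "\<dots> = A x x" unfolding quadf_def by simp
  finally show ?thesis .
qed

lemma psdf_offdiag0:
  assumes "psdf I A" "x \<in> I" "y \<in> I" "x \<noteq> y" "finite I" "A x x = 0"
  shows "A x y = 0"
proof -
  have q: "quadf I A (\<lambda>a. if a = x then t else if a = y then 1 else 0) = 2 * t * A x y + A y y" for t
  proof -
    have "quadf I A (\<lambda>a. if a = x then t else if a = y then 1 else 0)
        = quadf {x, y} A (\<lambda>a. if a = x then t else if a = y then 1 else 0)"
      by (rule quadf_restrict) (use assms in auto)
    also have "\<dots> = 2 * t * A x y + A y y"
      using assms unfolding quadf_def psdf_def by (simp add: algebra_simps)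
    finally show ?thesis .
  qed
  have ge: "0 \<le> 2 * t * A x y + A y y" for t
    using assms(1) q[of t] unfolding psdf_def by metis
  show ?thesis
  proof (rule ccontr)
    assume ne: "A x y \<noteq> 0"
    have "0 \<le> 2 * (- (\<bar>A y y\<bar> + 1) / (2 * A x y)) * A x y + A y y" by (rule ge)
    also have "\<dots> = - (\<bar>A y y\<bar> + 1) + A y y" using ne by (simp add: field_simps)
    finally show False by linarith
  qed
qed

lemma trf_psd:
  assumes "finite I" "psdf I A" "psdf I B"
  shows "0 \<le> trf I A B"
  using assms
proof (induction I arbitrary: A B rule: finite_induct)
  case empty
  then show ?case by (simp add: trf_def)
next
  case (insert x F)
  have psdBF: "psdf F B" by (rule psdf_insertD[OF insert(1,2) insert.prems(2)])
  have psdAF: "psdf F A" by (rule psdf_insertD[OF insert(1,2) insert.prems(1)])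
  have symA: "\<And>a b. a \<in> insert x F \<Longrightarrow> b \<in> insert x F \<Longrightarrow> A a b = A b a"
    using insert.prems(1) unfolding psdf_def by blast
  have symB: "\<And>a b. a \<in> insert x F \<Longrightarrow> b \<in> insert x F \<Longrightarrow> B a b = B b a"
    using insert.prems(2) unfolding psdf_def by blast
  have Axx: "0 \<le> A x x" using psdf_diag[OF insert.prems(1)] insert(1) by simp
  show ?case
  proof (cases "A x x = 0")
    case True
    have z: "A x b = 0" "A b x = 0" if "b \<in> F" for b
    proof -
      have "x \<noteq> b" using that insert(2) by auto
      thus "A x b = 0" using psdf_offdiag0[OF insert.prems(1), of x b] insert(1) True that by simp
      thus "A b x = 0" using symA[of x b] that by simp
    qed
    have "trf (insert x F) A B = trf F A B"
      unfolding trf_insert[OF insert(1,2)] using True z by simp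
    moreover have "0 \<le> trf F A B"
      using insert.IH[OF psdAF psdBF] .
    ultimately show ?thesis by simp
  next
    case False
    hence pos: "A x x > 0" using Axx by simp
    define A' where "A' a b = A a b - A a x * A x b / A x x" for a b
    have psdA': "psdf F A'"
      unfolding psdf_def
    proof (intro conjI allI ballI)
      fix a b assume "a \<in> F" "b \<in> F"
      thus "A' a b = A' b a" unfolding A'_def using symA[of a b] symA[of a x] symA[of x b] by simp
    next
      fix v
      define S where "S = (\<Sum>b\<in>F. A x b * v b)"
      define w where "w = v(x := - S / A x x)"
      have "0 \<le> quadf (insert x F) A w" using insert.prems unfolding psdf_def by auto
      also have "quadf (insert x F) A w = quadf F A v - S * S / A x x"
      proof -
        have wF: "\<And>b. b \<in> F \<Longrightarrow> w b = v b" unfolding w_def using insert(2) by auto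
        have e1: "(\<Sum>b\<in>F. w x * A x b * w b) = w x * S" unfolding S_def
          using wF by (simp add: sum_distrib_left mult.assoc)
        have e2: "(\<Sum>a\<in>F. w a * A a x * w x) = w x * S" unfolding S_def
          using wF symA by (simp add: sum_distrib_left mult_ac)
        have e3: "quadf F A w = quadf F A v" unfolding quadf_def using wF by simp
        have "quadf (insert x F) A w = w x * A x x * w x + w x * S + w x * S + quadf F A v"
          unfolding quadf_insert[OF insert(1,2)] e1 e2 e3 by simp
        thus ?thesis using pos unfolding w_def by (simp add: field_simps power2_eq_square)
      qed
      also have "quadf F A v - S * S / A x x = quadf F A' v"
      proof -
        have "quadf F A' v = quadf F A v - (\<Sum>a\<in>F. \<Sum>b\<in>F. (v a * A a x) * (A x b * v b) / A x x)"
          unfolding quadf_def A'_def by (simp add: algebra_simps sum_subtractf)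
        also have "(\<Sum>a\<in>F. \<Sum>b\<in>F. (v a * A a x) * (A x b * v b) / A x x)
           = (\<Sum>a\<in>F. v a * A a x) * (\<Sum>b\<in>F. A x b * v b) / A x x"
          by (simp add: sum_product sum_divide_distrib)
        also have "(\<Sum>a\<in>F. v a * A a x) = S" unfolding S_def
          using symA by (intro sum.cong) auto
        finally show ?thesis unfolding S_def by simp
      qed
      finally show "0 \<le> quadf F A' v" .
    qed
    have IH: "0 \<le> trf F A' B" using insert.IH[OF psdA' psdBF] .
    define w where "w a = A x a" for a
    have qB: "0 \<le> quadf (insert x F) B w" using insert.prems unfolding psdf_def by auto
    have D: "(\<Sum>a\<in>F. \<Sum>b\<in>F. A a x * A x b / A x x * B b a)
          = (\<Sum>a\<in>F. \<Sum>b\<in>F. w a * B a b * w b) / A x x"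
      unfolding sum_divide_distrib w_def
      by (intro sum.cong refl) (use symA symB in auto)
    have e1: "trf F A B = trf F A' B + (\<Sum>a\<in>F. \<Sum>b\<in>F. w a * B a b * w b) / A x x"
    proof -
      have "trf F A' B = trf F A B - (\<Sum>a\<in>F. \<Sum>b\<in>F. A a x * A x b / A x x * B b a)"
        unfolding trf_def A'_def by (simp add: left_diff_distrib sum_subtractf)
      thus ?thesis unfolding D by simp
    qed
    have e2: "quadf (insert x F) B w / A x x = A x x * B x x + (\<Sum>b\<in>F. A x b * B b x)
         + (\<Sum>a\<in>F. A a x * B x a) + (\<Sum>a\<in>F. \<Sum>b\<in>F. w a * B a b * w b) / A x x"
    proof -
      have f1: "(\<Sum>b\<in>F. w x * B x b * w b) = A x x * (\<Sum>a\<in>F. A a x * B x a)"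
        unfolding w_def sum_distrib_left by (intro sum.cong refl) (use symA in auto)
      have f2: "(\<Sum>a\<in>F. w a * B a x * w x) = A x x * (\<Sum>b\<in>F. A x b * B b x)"
        unfolding w_def sum_distrib_left by (intro sum.cong refl) (use symB in auto)
      show ?thesis unfolding quadf_insert[OF insert(1,2)] f1 f2
        using pos by (simp add: w_def field_simps quadf_def)
    qed
    have "trf (insert x F) A B = trf F A' B + quadf (insert x F) B w / A x x"
      unfolding trf_insert[OF insert(1,2)] e1 e2 by simp
    moreover have "0 \<le> quadf (insert x F) B w / A x x" using qB pos by simp
    ultimately show ?thesis using IH by simp
  qed
qed

lemma fock_block_img: "fock_block k = (\<lambda>r. (r, k - r)) ` {..k}"
  unfolding fock_block_def by (auto simp: image_iff)

lemma fock_block_inj: "inj_on (\<lambda>r. (r, k - r)) {..k}"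
  by (auto simp: inj_on_def)

lemma fock_block_finite: "finite (fock_block k)"
  unfolding fock_block_img by simp

lemma fock_block_sum: "(\<Sum>a\<in>fock_block k. f a) = (\<Sum>r\<le>k. f (r, k - r))"
  unfolding fock_block_img by (simp add: sum.reindex[OF fock_block_inj])

definition PDr :: "real \<Rightarrow> fock_idx \<Rightarrow> fock_idx \<Rightarrow> real" where
  "PDr pz a b = pz * (if a = b \<and> fst a \<ge> 1 \<and> snd a \<ge> 1 then 1 else 0)
     + (1 - pz) * (if fst a + snd a = fst b + snd b then
         (\<Sum>m\<in>{1..fst a + snd a - 1}. da_amp (fst a + snd a) m (fst a) * da_amp (fst a + snd a) m (fst b)) else 0)"

lemma P_DC_real: "P_DC pz a b = complex_of_real (PDr pz a b)"
proof -
  have h: "P_HV a b = complex_of_real (if a = b \<and> fst a \<ge> 1 \<and> snd a \<ge> 1 then 1 else 0)"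
    unfolding P_HV_def by auto
  have d: "P_DA a b = complex_of_real (if fst a + snd a = fst b + snd b then
         (\<Sum>m\<in>{1..fst a + snd a - 1}. da_amp (fst a + snd a) m (fst a) * da_amp (fst a + snd a) m (fst b)) else 0)"
    by (simp add: P_DA_def Let_def)
  show ?thesis unfolding P_DC_def h d PDr_def by simp
qed

lemma PDr_sym: "PDr pz a b = PDr pz b a"
  unfolding PDr_def by (cases "a = b") (auto simp: mult.commute)

lemma PDr_block:
  assumes "r \<le> k" "s \<le> k"
  shows "PDr pz (r, k - r) (s, k - s) = Mk pz k r s"
  unfolding PDr_def Mk_def using assms by auto

lemma quadf_block:
  "quadf (fock_block k) (\<lambda>a b. c1 * PDr pz a b + c2 * (if a = b then 1 else 0)) v
     = c1 * qfM pz k (\<lambda>r. v (r, k - r)) + c2 * nn2 k (\<lambda>r. v (r, k - r))"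
proof -
  have "quadf (fock_block k) (\<lambda>a b. c1 * PDr pz a b + c2 * (if a = b then 1 else 0)) v
      = (\<Sum>r\<le>k. \<Sum>s\<le>k. v (r, k - r) * (c1 * Mk pz k r s + c2 * (if r = s then 1 else 0)) * v (s, k - s))"
    unfolding quadf_def fock_block_sum
    by (intro sum.cong refl) (auto simp: PDr_block)
  also have "\<dots> = (\<Sum>r\<le>k. c1 * (\<Sum>s\<le>k. v (r, k - r) * Mk pz k r s * v (s, k - s)) + c2 * (v (r, k - r) * v (r, k - r)))"
  proof (intro sum.cong refl)
    fix r assume r: "r \<in> {..k}"
    have "(\<Sum>s\<le>k. v (r, k - r) * (c1 * Mk pz k r s + c2 * (if r = s then 1 else 0)) * v (s, k - s))
      = (\<Sum>s\<le>k. c1 * (v (r, k - r) * Mk pz k r s * v (s, k - s)) + (if s = r then c2 * (v (r, k - r) * v (r, k - r)) else 0))"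
      by (intro sum.cong refl) (auto simp: algebra_simps)
    also have "\<dots> = c1 * (\<Sum>s\<le>k. v (r, k - r) * Mk pz k r s * v (s, k - s)) + c2 * (v (r, k - r) * v (r, k - r))"
      using r by (simp add: sum.distrib sum_distrib_left)
    finally show "(\<Sum>s\<le>k. v (r, k - r) * (c1 * Mk pz k r s + c2 * (if r = s then 1 else 0)) * v (s, k - s))
      = c1 * (\<Sum>s\<le>k. v (r, k - r) * Mk pz k r s * v (s, k - s)) + c2 * (v (r, k - r) * v (r, k - r))" .
  qed
  also have "\<dots> = c1 * qfM pz k (\<lambda>r. v (r, k - r)) + c2 * nn2 k (\<lambda>r. v (r, k - r))"
    unfolding qfM_def nn2_def by (simp add: sum.distrib sum_distrib_left)
  finally show ?thesis .
qed

lemma psdf_block: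
  assumes "\<And>x. 0 \<le> c1 * qfM pz k x + c2 * nn2 k x"
  shows "psdf (fock_block k) (\<lambda>a b. c1 * PDr pz a b + c2 * (if a = b then 1 else 0))"
  unfolding psdf_def quadf_block using assms by (auto simp: PDr_sym)

lemma nn2_nonneg: "0 \<le> nn2 k x"
  unfolding nn2_def by (intro sum_nonneg) simp

lemma lambda_mono_Suc: 
  assumes "0 \<le> pz" "pz \<le> 1"
  shows "lambda_min pz k \<le> lambda_min pz (Suc k)"
proof -
  define c where "c k = (if odd k then 8 else 16) * (1/2::real)^k" for k
  have lm: "lambda_min pz k = 1/2 - 1/2 * sqrt ((2*pz - 1)^2 + c k * (pz - pz^2))" for k
    unfolding lambda_min_def c_def by auto
  have "c (Suc k) \<le> c k" unfolding c_def by auto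
  moreover have "0 \<le> pz - pz^2" using assms by (simp add: power2_eq_square mult_left_le_one_le)
  ultimately have "c (Suc k) * (pz - pz^2) \<le> c k * (pz - pz^2)" by (rule mult_right_mono)
  thus ?thesis unfolding lm by simp
qed

lemma lambda_mono:
  assumes "0 \<le> pz" "pz \<le> 1" "j \<le> k"
  shows "lambda_min pz j \<le> lambda_min pz k"
  using assms(3)
proof (induction k)
  case 0 thus ?case by simp
next
  case (Suc k)
  show ?case
  proof (cases "j = Suc k")
    case False
    hence "j \<le> k" using Suc by simp
    thus ?thesis using Suc.IH lambda_mono_Suc[OF assms(1,2), of k] by simp
  qed simp
qed

lemma lambda_small:
  assumes "0 \<le> pz" "pz \<le> 1" "k \<in> {1, 2}"
  shows "lambda_min pz k = 0"
proof -
  have f1: "(2*pz - 1)^2 + 8 * (1/2)^1 * (pz - pz^2) = (1::real)" by (simp add: power2_eq_square algebra_simps)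
  have f2: "(2*pz - 1)^2 + 16 * (1/2)^2 * (pz - pz^2) = (1::real)" by (simp add: power2_eq_square algebra_simps)
  have l1: "lambda_min pz 1 = 1/2 - 1/2 * sqrt ((2*pz - 1)^2 + 8 * (1/2)^1 * (pz - pz^2))"
    unfolding lambda_min_def by simp
  have l2: "lambda_min pz 2 = 1/2 - 1/2 * sqrt ((2*pz - 1)^2 + 16 * (1/2)^2 * (pz - pz^2))"
    unfolding lambda_min_def by simp
  show ?thesis using assms(3) l1[unfolded f1] l2[unfolded f2] by auto
qed

lemma trf_lin:
  assumes "finite I"
  shows "trf I A (\<lambda>b a. c1 * B b a + c2 * (if b = a then 1 else 0)) = c1 * trf I A B + c2 * (\<Sum>a\<in>I. A a a)"
proof -
  have "trf I A (\<lambda>b a. c1 * B b a + c2 * (if b = a then 1 else 0))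
      = (\<Sum>a\<in>I. c1 * (\<Sum>b\<in>I. A a b * B b a) + c2 * A a a)"
    unfolding trf_def
  proof (intro sum.cong refl)
    fix a assume a: "a \<in> I"
    have "(\<Sum>b\<in>I. A a b * (c1 * B b a + c2 * (if b = a then 1 else 0)))
        = (\<Sum>b\<in>I. c1 * (A a b * B b a) + (if b = a then c2 * A a a else 0))"
      by (intro sum.cong refl) (auto simp: algebra_simps)
    also have "\<dots> = c1 * (\<Sum>b\<in>I. A a b * B b a) + c2 * A a a"
      using a assms by (simp add: sum.distrib sum_distrib_left)
    finally show "(\<Sum>b\<in>I. A a b * (c1 * B b a + c2 * (if b = a then 1 else 0))) = c1 * (\<Sum>b\<in>I. A a b * B b a) + c2 * A a a" .
  qed
  thus ?thesis unfolding trf_def by (simp add: sum.distrib sum_distrib_left)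
qed

lemma Re_sum2: "Re (\<Sum>a\<in>I. \<Sum>b\<in>J. f a b) = (\<Sum>a\<in>I. \<Sum>b\<in>J. Re (f a b))"
  by (simp add: Re_sum)

context
  fixes \<rho> :: fock_op
  assumes dm: "density_matrix \<rho>"
begin

definition RR :: "fock_idx \<Rightarrow> fock_idx \<Rightarrow> real" where "RR a b = Re (\<rho> a b)"
definition ww :: "nat \<Rightarrow> real" where "ww k = (\<Sum>a\<in>fock_block k. RR a a)"

lemma psd_RR: "psdf (fock_block k) RR"
  unfolding psdf_def
proof (intro conjI allI ballI)
  fix a b
  have "\<rho> a b = cnj (\<rho> b a)" by (rule spec[OF spec[OF conjunct1[OF dm[unfolded density_matrix_def]]]])
  thus "RR a b = RR b a" unfolding RR_def by simp
next
  fix v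
  have "0 \<le> Re (\<Sum>a\<in>fock_block k. \<Sum>b\<in>fock_block k. cnj (complex_of_real (v a)) * \<rho> a b * complex_of_real (v b))"
  proof -
    have "\<forall>F (v :: fock_idx \<Rightarrow> complex). finite F \<longrightarrow>
        0 \<le> Re (\<Sum>a\<in>F. \<Sum>b\<in>F. cnj (v a) * \<rho> a b * v b)"
      by (rule conjunct1[OF conjunct2[OF dm[unfolded density_matrix_def]]])
    from this[rule_format, OF fock_block_finite] show ?thesis .
  qed
  also have "\<dots> = quadf (fock_block k) RR v"
    unfolding Re_sum2 quadf_def RR_def by simp
  finally show "0 \<le> quadf (fock_block k) RR v" .
qed

lemma ww_nonneg: "0 \<le> ww k"
  unfolding ww_def using psdf_diag[OF psd_RR] fock_block_finite by (simp add: sum_nonneg)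

lemma tk_eq: "Re (\<Sum>a\<in>fock_block k. \<Sum>b\<in>fock_block k. \<rho> a b * P_DC pz b a) = trf (fock_block k) RR (PDr pz)"
  unfolding Re_sum2 trf_def RR_def P_DC_real by simp

lemma tPi_eq: "Re (\<Sum>a\<in>fock_block k. \<Sum>b\<in>fock_block k. \<rho> a b * Pi_N N b a) = (if k \<le> N then ww k else 0)"
proof -
  have Pi: "Pi_N N b a = (if b = a \<and> k \<le> N then 1 else 0)" if "b \<in> fock_block k" for a b
  proof -
    have "Pi_N N b a = (\<Sum>j\<le>N. if j = k then (if b = a then 1 else 0) else 0)"
      unfolding Pi_N_def Pi_tilde_def using that unfolding fock_block_def
      by (intro sum.cong refl) auto
    thus ?thesis by auto
  qed
  have "Re (\<Sum>a\<in>fock_block k. \<Sum>b\<in>fock_block k. \<rho> a b * Pi_N N b a)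
     = (\<Sum>a\<in>fock_block k. \<Sum>b\<in>fock_block k. if b = a then (if k \<le> N then RR a a else 0) else 0)"
    unfolding Re_sum2 RR_def by (intro sum.cong refl) (auto simp: Pi)
  also have "\<dots> = (if k \<le> N then ww k else 0)"
    unfolding ww_def using fock_block_finite by simp
  finally show ?thesis .
qed

lemma tk_bounds:
  assumes p: "0 \<le> pz" "pz \<le> 1"
  shows "0 \<le> trf (fock_block k) RR (PDr pz)" "trf (fock_block k) RR (PDr pz) \<le> ww k"
proof -
  have "0 \<le> trf (fock_block k) RR (\<lambda>b a. 1 * PDr pz b a + 0 * (if b = a then 1 else 0))"
    by (rule trf_psd[OF fock_block_finite psd_RR psdf_block]) (use qfM_nonneg[OF p] in simp)
  thus "0 \<le> trf (fock_block k) RR (PDr pz)" unfolding trf_lin[OF fock_block_finite] by simp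
  have "0 \<le> trf (fock_block k) RR (\<lambda>b a. (-1) * PDr pz b a + 1 * (if b = a then 1 else 0))"
    by (rule trf_psd[OF fock_block_finite psd_RR psdf_block]) (use qfM_le[OF p] in simp)
  thus "trf (fock_block k) RR (PDr pz) \<le> ww k" unfolding trf_lin[OF fock_block_finite] ww_def by simp
qed

lemma tk_lower:
  assumes p: "0 \<le> pz" "pz \<le> 1" and j: "j \<ge> 3" "j \<le> k"
  shows "lambda_min pz j * ww k \<le> trf (fock_block k) RR (PDr pz)"
proof -
  have "0 \<le> trf (fock_block k) RR (\<lambda>b a. 1 * PDr pz b a + (- lambda_min pz j) * (if b = a then 1 else 0))"
  proof (rule trf_psd[OF fock_block_finite psd_RR psdf_block])
    fix x
    have "lambda_min pz j * nn2 k x \<le> lambda_min pz k * nn2 k x"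
      using lambda_mono[OF p j(2)] nn2_nonneg by (rule mult_right_mono)
    also have "\<dots> \<le> qfM pz k x" using qfM_ge[of k pz x] j p by simp
    finally show "0 \<le> 1 * qfM pz k x + - lambda_min pz j * nn2 k x" by simp
  qed
  thus ?thesis unfolding trf_lin[OF fock_block_finite] ww_def by simp
qed

lemma ww_has_sum: "(ww has_sum 1) UNIV"
proof -
  have d: "((\<lambda>a. RR a a) has_sum 1) UNIV"
  proof -
    have "((\<lambda>a. \<rho> a a) has_sum 1) UNIV"
      by (rule conjunct2[OF conjunct2[OF dm[unfolded density_matrix_def]]])
    from has_sum_Re[OF this] show ?thesis unfolding RR_def by simp
  qed
  define h where "h = (\<lambda>(k::nat, r::nat). (r, k - r))"
  have inj: "inj_on h (Sigma UNIV (\<lambda>k. {..k}))"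
  proof (rule inj_onI)
    fix x y assume "x \<in> Sigma UNIV (\<lambda>k. {..k})" "y \<in> Sigma UNIV (\<lambda>k. {..k})" "h x = h y"
    thus "x = y" unfolding h_def by (cases x, cases y) auto
  qed
  have img: "h ` (Sigma UNIV (\<lambda>k. {..k})) = UNIV"
  proof (rule set_eqI, rule iffI)
    fix ab :: fock_idx
    obtain a b where ab: "ab = (a, b)" by fastforce
    have "h (a + b, a) = (a, b)" unfolding h_def by simp
    thus "ab \<in> h ` (Sigma UNIV (\<lambda>k. {..k}))" unfolding ab
      by (intro image_eqI[of _ _ "(a + b, a)"]) auto
  qed simp
  have "(((\<lambda>a. RR a a) \<circ> h) has_sum 1) (Sigma UNIV (\<lambda>k. {..k}))"
    using d has_sum_reindex[OF inj, where g="\<lambda>a. RR a a" and x=1] img by simp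
  moreover have "((\<lambda>r. ((\<lambda>a. RR a a) \<circ> h) (k, r)) has_sum ww k) {..k}" for k
    unfolding ww_def fock_block_sum h_def by (intro has_sum_finiteI) auto
  ultimately show ?thesis by (rule has_sum_Sigma')
qed

end

theorem corollary1:
  fixes \<rho> :: fock_op and pz q :: real and N :: nat
  assumes "density_matrix \<rho>"
    and "0 \<le> pz" and "pz \<le> 1"
    and "lambda_min pz (N + 1) > 0"
    and "tr_block \<rho> (P_DC pz) = q"
  shows "tr_block \<rho> (Pi_N N) \<ge> 1 - q / lambda_min pz (N + 1)"
proof -
  note dm = assms(1) and p = assms(2,3)
  define lam where "lam = lambda_min pz (N + 1)"
  have lam: "lam > 0" using assms(4) lam_def by simp
  have N3: "N + 1 \<ge> 3"
  proof (rule ccontr)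
    assume "\<not> N + 1 \<ge> 3"
    hence "N + 1 \<in> {1, 2}" by auto
    hence "lam = 0" unfolding lam_def by (rule lambda_small[OF p])
    thus False using lam by simp
  qed
  define t where "t k = trf (fock_block k) (RR \<rho>) (PDr pz)" for k
  define w where "w = ww \<rho>"
  have q: "q = infsum t UNIV"
    using assms(5) unfolding tr_block_def t_def tk_eq[OF dm] by simp
  have pi: "tr_block \<rho> (Pi_N N) = infsum w {..N}"
  proof -
    have "tr_block \<rho> (Pi_N N) = infsum (\<lambda>k. if k \<le> N then w k else 0) UNIV"
      unfolding tr_block_def tPi_eq[OF dm] w_def ..
    also have "\<dots> = infsum w {..N}"
      by (rule infsum_cong_neutral) auto
    finally show ?thesis .
  qed
  have wsum: "w summable_on UNIV" using ww_has_sum[OF dm] unfolding w_def summable_on_def by blast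
  have w1: "infsum w UNIV = 1" using ww_has_sum[OF dm] unfolding w_def by (rule infsumI)
  have t0: "0 \<le> t k" for k unfolding t_def using tk_bounds(1)[OF dm p] .
  have tw: "t k \<le> w k" for k unfolding t_def w_def using tk_bounds(2)[OF dm p] .
  have tsum: "t summable_on UNIV"
    by (rule summable_on_comparison_test[OF wsum]) (use t0 tw in auto)
  have U: "UNIV = {..N} \<union> {N<..}" by auto
  have D: "{..N} \<inter> {N<..} = {}" by auto
  have w_split: "infsum w UNIV = infsum w {..N} + infsum w {N<..}"
    unfolding U by (rule infsum_Un_disjoint[OF summable_on_subset_banach[OF wsum] summable_on_subset_banach[OF wsum] D]) auto
  have t_split: "infsum t UNIV = infsum t {..N} + infsum t {N<..}"
    unfolding U by (rule infsum_Un_disjoint[OF summable_on_subset_banach[OF tsum] summable_on_subset_banach[OF tsum] D]) auto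
  have tN: "0 \<le> infsum t {..N}" by (rule infsum_nonneg) (use t0 in auto)
  have "infsum (\<lambda>k. lam * w k) {N<..} \<le> infsum t {N<..}"
  proof (rule infsum_mono)
    show "(\<lambda>k. lam * w k) summable_on {N<..}"
      by (rule summable_on_cmult_right[OF summable_on_subset_banach[OF wsum]]) auto
    show "t summable_on {N<..}" by (rule summable_on_subset_banach[OF tsum]) auto
    fix k assume "k \<in> {N<..}"
    hence "N + 1 \<le> k" by simp
    thus "lam * w k \<le> t k" unfolding lam_def w_def t_def by (rule tk_lower[OF dm p N3])
  qed
  moreover have "infsum (\<lambda>k. lam * w k) {N<..} = lam * infsum w {N<..}"
    by (rule infsum_cmult_right) (rule summable_on_subset_banach[OF wsum], auto)
  ultimately have "lam * infsum w {N<..} \<le> q" using q t_split tN by simp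
  moreover have "1 - infsum w {..N} = infsum w {N<..}" using w1 w_split by simp
  ultimately have "lam * (1 - infsum w {..N}) \<le> q" by simp
  hence "1 - infsum w {..N} \<le> q / lam" using lam by (simp add: pos_le_divide_eq mult.commute)
  thus ?thesis unfolding pi lam_def[symmetric] by simp
qed

end
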